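(* Let $D_*=\{(y_1,y_2)\in\mathbb{R}^2:y_2>0\}$, let $W$ be a planar Brownian motion, let $x\in D_*$ and let $c_1<\infty$. For each $\delta>0$ let $X^\delta$ be any process constructed as in the context. Then $X^\delta$ converges in distribution to reflected Brownian motion in $D_*$ (starting from $x$) as $\delta\to0$.
   Context: Reflected Brownian motion in $D_*$ driven by $W$ and started from $z$ at time $s$ is the unique continuous process $Z$ with values in $\overline{D_*}$ solving the Skorohod equation $Z_t=z+(W_t-W_s)+\int_s^t \mathbf{n}\,dL_u$, $t\ge s$, where $\mathbf{n}=(0,1)$ is the inward unit normal and $L$ is a nondecreasing continuous process with $L_s=0$ that increases only when $Z\in\partial D_*$. Construction of $X^\delta$ for fixed $\delta>0$: let $X^{\delta,1}$ be reflected Brownian motion in $D_*$ driven by $W$ starting from $x$ at time $T_0=0$; let $T_1\ge T_0$ be a stopping time with $X^{\delta,1}_{T_1}\in\partial D_*$ a.s., and $V_1$ a random variable with $|V_1|\le c_1\delta^2$ a.s. Inductively, given $X^{\delta,j}$, a stopping time $T_j\ge T_{j-1}$ for $X^{\delta,j}$ with $X^{\delta,j}_{T_j}\in\partial D_*$ a.s., and a random variable $V_j$ with $|V_j|\le c_1\delta^2$ a.s., define $\{X^{\delta,j+1}_t,t\ge T_j\}$ to be reflected Brownian motion in $D_*$ driven by $\{W_t,t\ge T_j\}$ starting at time $T_j$ from the point $X^{\delta,j}_{T_j}+(V_j,\delta)$; then choose any $X^{\delta,j+1}$-stopping time $T_{j+1}\ge T_j$ with $X^{\delta,j+1}_{T_{j+1}}\in\partial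 D_*$ a.s. and a random variable $V_{j+1}$ with $|V_{j+1}|\le c_1\delta^2$ a.s. Set $X^\delta_t=X^{\delta,j}_t$ for $t\in[T_{j-1},T_j)$ (one has $T_j\to\infty$ a.s., so $X^\delta$ is defined for all $t\ge0$). *)

theory Defs
  imports "HOL-Probability.Probability"
begin

definition Dstar :: "(real \<times> real) set" where
  "Dstar = {y. snd y > 0}"

definition Dstar_bdry :: "(real \<times> real) set" where
  "Dstar_bdry = {y. snd y = 0}"

definition planar_BM :: "'w measure \<Rightarrow> (real \<Rightarrow> 'w measure) \<Rightarrow> (real \<Rightarrow> 'w \<Rightarrow> real \<times> real) \<Rightarrow> bool" where
  "planar_BM M Fil W \<longleftrightarrow>
     prob_space M \<and> filtration (space M) Fil \<and> (\<forall>t. sets (Fil t) \<subseteq> sets M) \<and>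
     (\<forall>t. W t \<in> borel_measurable (Fil t)) \<and>
     (AE \<omega> in M. W 0 \<omega> = 0) \<and>
     (AE \<omega> in M. continuous_on UNIV (\<lambda>t. W t \<omega>)) \<and>
     (\<forall>s t. 0 \<le> s \<and> s < t \<longrightarrow>
        distributed M lborel (\<lambda>\<omega>. W t \<omega> - W s \<omega>)
          (\<lambda>z. ennreal (normal_density 0 (sqrt (t - s)) (fst z) * normal_density 0 (sqrt (t - s)) (snd z))) \<and>
        (\<forall>A \<in> sets (Fil s). \<forall>B \<in> sets (borel :: (real \<times> real) measure).
           measure M (A \<inter> {\<omega> \<in> space M. W t \<omega> - W s \<omega> \<in> B})
             = measure M A * measure M {\<omega> \<in> space M. W t \<omega> - W s \<omega> \<in> B}))"

text \<open>Pathwise Skorohod equation: the path Z is the reflected Brownian motion in D_* driven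
  by the path w, started from z at time s: Z_t = z + (w_t - w_s) + (0, L_t) for t >= s,
  Z continuous with values in the closure of D_*, L continuous nondecreasing with L_s = 0,
  and L increases only when Z is on the boundary (L is constant on every interval
  [a,b] subset of [s,oo) on which Z stays in D_*).\<close>

definition RBM_path :: "(real \<Rightarrow> real \<times> real) \<Rightarrow> real \<Rightarrow> real \<times> real \<Rightarrow> (real \<Rightarrow> real \<times> real) \<Rightarrow> bool" where
  "RBM_path w s z Z \<longleftrightarrow>
     (\<exists>L :: real \<Rightarrow> real.
        continuous_on {s..} Z \<and> (\<forall>t\<ge>s. Z t \<in> closure Dstar) \<and>
        continuous_on {s..} L \<and> L s = 0 \<and> mono_on {s..} L \<and>
        (\<forall>t\<ge>s. Z t = z + (w t - w s) + (0, L t)) \<and>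
        (\<forall>a b. s \<le> a \<and> a \<le> b \<and> (\<forall>u\<in>{a..b}. Z u \<in> Dstar) \<longrightarrow> L a = L b))"

text \<open>X is a process X^delta constructed as in the paper, for the given delta and c1:
  Xj j (j >= 1) are the pieces X^{delta,j}, T j (j >= 0) the stopping times with T 0 = 0,
  V j (j >= 1) the horizontal displacements.\<close>

definition constructed_process ::
  "'w measure \<Rightarrow> (real \<Rightarrow> 'w measure) \<Rightarrow> (real \<Rightarrow> 'w \<Rightarrow> real \<times> real) \<Rightarrow> real \<times> real \<Rightarrow> real \<Rightarrow> real
     \<Rightarrow> (real \<Rightarrow> 'w \<Rightarrow> real \<times> real) \<Rightarrow> bool" where
  "constructed_process M Fil W x c1 \<delta> X \<longleftrightarrow>
     (\<exists>(Xj :: nat \<Rightarrow> real \<Rightarrow> 'w \<Rightarrow> real \<times> real) (T :: nat \<Rightarrow> 'w \<Rightarrow> real) (V :: nat \<Rightarrow> 'w \<Rightarrow> real).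
        (\<forall>\<omega>\<in>space M. T 0 \<omega> = 0) \<and>
        (\<forall>j. stopping_time Fil (T j)) \<and>
        (\<forall>j. \<forall>\<omega>\<in>space M. T j \<omega> \<le> T (Suc j) \<omega>) \<and>
        (\<forall>j\<ge>1. \<forall>t. Xj j t \<in> borel_measurable M) \<and>
        (\<forall>j\<ge>1. V j \<in> borel_measurable M \<and> (\<forall>\<omega>\<in>space M. \<bar>V j \<omega>\<bar> \<le> c1 * \<delta>\<^sup>2)) \<and>
        (AE \<omega> in M. RBM_path (\<lambda>t. W t \<omega>) 0 x (\<lambda>t. Xj 1 t \<omega>)) \<and>
        (\<forall>j\<ge>1. AE \<omega> in M. Xj j (T j \<omega>) \<omega> \<in> Dstar_bdry) \<and>
        (\<forall>j\<ge>1. AE \<omega> in M.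
           RBM_path (\<lambda>t. W t \<omega>) (T j \<omega>) (Xj j (T j \<omega>) \<omega> + (V j \<omega>, \<delta>)) (\<lambda>t. Xj (Suc j) t \<omega>)) \<and>
        (\<forall>j\<ge>1. \<forall>\<omega>\<in>space M. \<forall>t. T (j - 1) \<omega> \<le> t \<and> t < T j \<omega> \<longrightarrow> X t \<omega> = Xj j t \<omega>) \<and>
        (\<forall>t. X t \<in> borel_measurable M))"

definition cadlag :: "(real \<Rightarrow> real \<times> real) \<Rightarrow> bool" where
  "cadlag f \<longleftrightarrow> (\<forall>t\<ge>0. continuous (at_right t) f) \<and> (\<forall>t>0. \<exists>l. (f \<longlongrightarrow> l) (at_left t))"

definition skorokhod_conv :: "(nat \<Rightarrow> real \<Rightarrow> real \<times> real) \<Rightarrow> (real \<Rightarrow> real \<times> real) \<Rightarrow> bool" where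
  "skorokhod_conv xs x \<longleftrightarrow>
     (\<exists>lam :: nat \<Rightarrow> real \<Rightarrow> real.
        (\<forall>n. strict_mono_on {0..} (lam n) \<and> continuous_on {0..} (lam n) \<and> lam n ` {0..} = {0..}) \<and>
        (\<forall>T>0. \<forall>\<epsilon>>0. eventually (\<lambda>n. \<forall>t\<in>{0..T}. \<bar>lam n t - t\<bar> < \<epsilon> \<and> norm (xs n (lam n t) - x t) < \<epsilon>) sequentially))"

definition J1_test_functional :: "((real \<Rightarrow> real \<times> real) \<Rightarrow> real) \<Rightarrow> bool" where
  "J1_test_functional F \<longleftrightarrow>
     F \<in> borel_measurable (Pi\<^sub>M UNIV (\<lambda>_. borel)) \<and>
     (\<exists>B. \<forall>f. \<bar>F f\<bar> \<le> B) \<and>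
     (\<forall>xs x. (\<forall>n. cadlag (xs n)) \<and> cadlag x \<and> skorokhod_conv xs x \<longrightarrow>
        (\<lambda>n. F (xs n)) \<longlonglongrightarrow> F x)"

definition conv_in_distribution ::
  "'w measure \<Rightarrow> (real \<Rightarrow> real \<Rightarrow> 'w \<Rightarrow> real \<times> real) \<Rightarrow> (real \<Rightarrow> 'w \<Rightarrow> real \<times> real) \<Rightarrow> bool" where
  "conv_in_distribution M Xd Z \<longleftrightarrow>
     (\<forall>F. J1_test_functional F \<longrightarrow>
        ((\<lambda>\<delta>. integral\<^sup>L M (\<lambda>\<omega>. F (\<lambda>t. Xd \<delta> t \<omega>))) \<longlongrightarrow> integral\<^sup>L M (\<lambda>\<omega>. F (\<lambda>t. Z t \<omega>))) (at_right 0))"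

end

theory Submission
  imports Defs
begin

lemma closure_Dstar_snd: "y \<in> closure Dstar \<Longrightarrow> snd y \<ge> 0"
proof -
  assume "y \<in> closure Dstar"
  moreover have "closure Dstar \<subseteq> {y. snd y \<ge> 0}"
  proof (rule closure_minimal)
    show "Dstar \<subseteq> {y. snd y \<ge> 0}" by (auto simp: Dstar_def)
    show "closed {y::real\<times>real. snd y \<ge> 0}"
      by (rule closed_Collect_le) (auto intro!: continuous_intros)
  qed
  ultimately show ?thesis by auto
qed

lemma rbm_props:
  assumes "RBM_path w s z Y"
  shows "\<exists>L. continuous_on {s..} Y \<and> continuous_on {s..} L \<and> L s = 0 \<and> mono_on {s..} L \<and>
     (\<forall>t\<ge>s. Y t = z + (w t - w s) + (0, L t)) \<and> (\<forall>t\<ge>s. snd (Y t) \<ge> 0) \<and>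
     (\<forall>t\<ge>s. L t = 0 \<or> (\<exists>u\<in>{s..t}. snd (Y u) = 0 \<and> L u = L t))"
proof -
  obtain L where cY: "continuous_on {s..} Y" and inD: "\<forall>t\<ge>s. Y t \<in> closure Dstar"
    and cL: "continuous_on {s..} L" and L0: "L s = 0" and mL: "mono_on {s..} L"
    and eq: "\<forall>t\<ge>s. Y t = z + (w t - w s) + (0, L t)"
    and flat: "\<forall>a b. s \<le> a \<and> a \<le> b \<and> (\<forall>u\<in>{a..b}. Y u \<in> Dstar) \<longrightarrow> L a = L b"
    using assms unfolding RBM_path_def by blast
  have pos: "\<forall>t\<ge>s. snd (Y t) \<ge> 0" using inD closure_Dstar_snd by blast
  have last: "\<exists>u\<in>{s..t}. snd (Y u) = 0 \<and> L u = L t" if ts: "t \<ge> s" and Lt: "L t \<noteq> 0" for t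
  proof -
    define Zs where "Zs = {u \<in> {s..t}. (snd \<circ> Y) u = 0}"
    have cYs: "continuous_on {s..t} (snd \<circ> Y)"
      by (rule continuous_on_compose[OF continuous_on_subset[OF cY]]) (auto intro: continuous_intros)
    have clZ: "closed Zs" unfolding Zs_def
      by (rule continuous_closed_preimage_constant[OF cYs]) auto
    show "\<exists>u\<in>{s..t}. snd (Y u) = 0 \<and> L u = L t"
    proof (cases "Zs = {}")
      case True
      then have "\<forall>u\<in>{s..t}. Y u \<in> Dstar"
        using pos by (force simp: Zs_def Dstar_def)
      then have "L s = L t" using flat ts by blast
      with L0 Lt show ?thesis by simp
    next
      case False
      have bdd: "bdd_above Zs" unfolding Zs_def by (auto intro: bdd_aboveI[of _ t])
      define u where "u = Sup Zs"
      have uZ: "u \<in> Zs" unfolding u_def by (rule closed_contains_Sup[OF False bdd clZ])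
      then have us: "u \<in> {s..t}" and Yu: "snd (Y u) = 0" by (auto simp: Zs_def)
      have "L u = L t"
      proof (cases "u = t")
        case True then show ?thesis by simp
      next
        case False
        then have ut: "u < t" using us by auto
        have above: "L a = L t" if "a \<in> {u<..t}" for a
        proof -
          have "\<forall>v\<in>{a..t}. Y v \<in> Dstar"
          proof
            fix v assume v: "v \<in> {a..t}"
            have "v \<notin> Zs"
            proof
              assume "v \<in> Zs"
              then have "v \<le> u" unfolding u_def by (rule cSup_upper[OF _ bdd])
              with v that show False by auto
            qed
            then have "snd (Y v) \<noteq> 0" using v that us by (auto simp: Zs_def)
            moreover have "s \<le> v" using v that us by auto
            ultimately show "Y v \<in> Dstar" using pos[rule_format, of v] unfolding Dstar_def by simp
          qed
          moreover have "s \<le> a" "a \<le> t" using that us by auto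
          ultimately show ?thesis using flat[rule_format, of a t] by blast
        qed
        have cLu: "continuous_on {u..t} L" by (rule continuous_on_subset[OF cL]) (use us in auto)
        have "closed {x \<in> {u..t}. L x = L t}"
          using continuous_closed_preimage_constant[OF cLu closed_atLeastAtMost, of "L t"] .
        moreover have "{u<..t} \<subseteq> {x \<in> {u..t}. L x = L t}" proof
          fix y assume "y \<in> {u<..t}"
          then show "y \<in> {x \<in> {u..t}. L x = L t}" using above[of y] by simp
        qed
        ultimately have "closure {u<..t} \<subseteq> {x \<in> {u..t}. L x = L t}"
          by (rule closure_minimal[rotated])
        moreover have "u \<in> closure {u<..t}" using ut by simp
        ultimately show ?thesis by blast
      qed
      then show ?thesis using us Yu by blast
    qed
  qed
  have last': "\<forall>t\<ge>s. L t = 0 \<or> (\<exists>u\<in>{s..t}. snd (Y u) = 0 \<and> L u = L t)"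
    using last by blast
  show ?thesis using cY cL L0 mL eq pos last' by blast
qed


lemma ext_cont:
  fixes f :: "real \<Rightarrow> 'b::topological_space"
  assumes "continuous_on {a..} f"
  shows "continuous_on UNIV (\<lambda>y. f (max y a))"
  by (rule continuous_on_compose2[OF assms]) (auto intro!: continuous_intros)

lemma H1:
  fixes f X :: "real \<Rightarrow> real \<times> real"
  assumes c: "continuous_on {a..} f" and "a \<le> t" "t < b" and eq: "\<forall>y. t \<le> y \<and> y < b \<longrightarrow> X y = f y"
  shows "continuous (at_right t) X"
proof -
  let ?h = "\<lambda>y. f (max y a)"
  have "isCont ?h t" using ext_cont[OF c] by (simp add: continuous_on_eq_continuous_at)
  then have "(?h \<longlongrightarrow> ?h t) (at_right t)"
    unfolding isCont_def by (rule tendsto_within_subset) simp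
  moreover have "?h t = X t" using eq assms by (simp add: max_def)
  moreover have "eventually (\<lambda>y. ?h y = X y) (at_right t)"
    unfolding eventually_at_right_field using assms by (intro exI[of _ b]) (auto simp: max_def)
  ultimately have "(X \<longlongrightarrow> X t) (at_right t)"
    using tendsto_cong by force
  then show ?thesis by (simp add: continuous_within)
qed

lemma H2:
  fixes f X :: "real \<Rightarrow> real \<times> real"
  assumes c: "continuous_on {a..} f" and "a < t" and eq: "\<forall>y. a < y \<and> y < t \<longrightarrow> X y = f y"
  shows "\<exists>l. (X \<longlongrightarrow> l) (at_left t)"
proof -
  let ?h = "\<lambda>y. f (max y a)"
  have "isCont ?h t" using ext_cont[OF c] by (simp add: continuous_on_eq_continuous_at)
  then have "(?h \<longlongrightarrow> ?h t) (at_left t)"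
    unfolding isCont_def by (rule tendsto_within_subset) simp
  moreover have "eventually (\<lambda>y. ?h y = X y) (at_left t)"
    unfolding eventually_at_left_field using assms by (intro exI[of _ a]) (auto simp: max_def)
  ultimately have "(X \<longlongrightarrow> ?h t) (at_left t)"
    using tendsto_cong by force
  then show ?thesis by blast
qed

lemma cadlag_Z:
  assumes "RBM_path w 0 x Zp"
  shows "cadlag Zp"
proof -
  have c: "continuous_on {0..} Zp" using assms unfolding RBM_path_def by blast
  show ?thesis unfolding cadlag_def
  proof safe
    fix t :: real assume "t \<ge> 0"
    then show "continuous (at_right t) Zp" by (intro H1[OF c, of t "t+1"]) auto
  next
    fix t :: real assume "t > 0"
    then show "\<exists>l. (Zp \<longlongrightarrow> l) (at_left t)" by (intro H2[OF c]) auto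
  qed
qed


lemma det:
  fixes w :: "real \<Rightarrow> real \<times> real" and x :: "real \<times> real" and \<delta> c1 :: real
    and T :: "nat \<Rightarrow> real" and V :: "nat \<Rightarrow> real" and Xj :: "nat \<Rightarrow> real \<Rightarrow> real \<times> real"
    and X Zp :: "real \<Rightarrow> real \<times> real"
  assumes wc: "continuous_on UNIV w" and w0: "w 0 = 0" and xD: "snd x > 0" and dpos: "\<delta> > 0"
    and T0: "T 0 = 0" and Tmono: "\<forall>j. T j \<le> T (Suc j)"
    and Vb: "\<forall>j\<ge>1. \<bar>V j\<bar> \<le> c1 * \<delta>\<^sup>2"
    and R1: "RBM_path w 0 x (Xj 1)"
    and bd: "\<forall>j\<ge>1. Xj j (T j) \<in> Dstar_bdry"
    and Rj: "\<forall>j\<ge>1. RBM_path w (T j) (Xj j (T j) + (V j, \<delta>)) (Xj (Suc j))"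
    and XX: "\<forall>j\<ge>1. \<forall>t. T (j - 1) \<le> t \<and> t < T j \<longrightarrow> X t = Xj j t"
    and RZ: "RBM_path w 0 x Zp"
  shows "cadlag X \<and> (\<forall>t Tm. 0 \<le> t \<longrightarrow> t \<le> Tm \<longrightarrow>
            norm (X t - Zp t) \<le> c1 * \<delta> * (snd (Zp Tm) - snd x - snd (w Tm) + \<delta>) + \<delta>)"
proof -
  define S where "S k = Xj (Suc k)" for k
  define z where "z k = (if k = 0 then x else Xj k (T k) + (V k, \<delta>))" for k
  have RS: "RBM_path w (T k) (z k) (S k)" for k
  proof (cases k)
    case 0 then show ?thesis using R1 T0 by (simp add: S_def z_def)
  next
    case (Suc j) then show ?thesis using Rj[rule_format, of "Suc j"] by (simp add: S_def z_def)
  qed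
  have "\<forall>k. \<exists>L. continuous_on {T k..} (S k) \<and> continuous_on {T k..} L \<and> L (T k) = 0 \<and> mono_on {T k..} L \<and>
     (\<forall>t\<ge>T k. S k t = z k + (w t - w (T k)) + (0, L t)) \<and> (\<forall>t\<ge>T k. snd (S k t) \<ge> 0) \<and>
     (\<forall>t\<ge>T k. L t = 0 \<or> (\<exists>u\<in>{T k..t}. snd (S k u) = 0 \<and> L u = L t))"
    using rbm_props[OF RS] by blast
  then obtain L where Lall: "\<forall>k. continuous_on {T k..} (S k) \<and> continuous_on {T k..} (L k) \<and> L k (T k) = 0 \<and> mono_on {T k..} (L k) \<and>
     (\<forall>t\<ge>T k. S k t = z k + (w t - w (T k)) + (0, L k t)) \<and> (\<forall>t\<ge>T k. snd (S k t) \<ge> 0) \<and>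
     (\<forall>t\<ge>T k. L k t = 0 \<or> (\<exists>u\<in>{T k..t}. snd (S k u) = 0 \<and> L k u = L k t))"
    using choice[of "\<lambda>k L. continuous_on {T k..} (S k) \<and> continuous_on {T k..} L \<and> L (T k) = 0 \<and> mono_on {T k..} L \<and>
     (\<forall>t\<ge>T k. S k t = z k + (w t - w (T k)) + (0, L t)) \<and> (\<forall>t\<ge>T k. snd (S k t) \<ge> 0) \<and>
     (\<forall>t\<ge>T k. L t = 0 \<or> (\<exists>u\<in>{T k..t}. snd (S k u) = 0 \<and> L u = L t))"] by blast
  have cS: "continuous_on {T k..} (S k)" for k using Lall by blast
  have L0: "L k (T k) = 0" for k using Lall by blast
  have mL: "mono_on {T k..} (L k)" for k using Lall by blast
  have eqS: "S k t = z k + (w t - w (T k)) + (0, L k t)" if "t \<ge> T k" for k t using Lall that by blast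
  have posS: "snd (S k t) \<ge> 0" if "t \<ge> T k" for k t using Lall that by blast
  have lastS: "L k t = 0 \<or> (\<exists>u\<in>{T k..t}. snd (S k u) = 0 \<and> L k u = L k t)" if "t \<ge> T k" for k t
    using Lall that by blast
  obtain LZ where cZ: "continuous_on {0..} Zp" and LZ0: "LZ 0 = 0" and mLZ: "mono_on {0..} LZ"
    and eqZ: "\<forall>t\<ge>0. Zp t = x + (w t - w 0) + (0, LZ t)" and posZ: "\<forall>t\<ge>0. snd (Zp t) \<ge> 0"
    and lastZ: "\<forall>t\<ge>0. LZ t = 0 \<or> (\<exists>u\<in>{0..t}. snd (Zp u) = 0 \<and> LZ u = LZ t)"
    using rbm_props[OF RZ] by blast
  have Tle: "T i \<le> T j" if "i \<le> j" for i j
    using lift_Suc_mono_le[of T, OF _ that] Tmono by blast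
  have Tnn: "T k \<ge> 0" for k using Tle[of 0 k] T0 by simp
  have bdS: "snd (S k (T (Suc k))) = 0" for k
    using bd[rule_format, of "Suc k"] by (simp add: S_def Dstar_bdry_def)
  define g where "g t = snd x + snd (w t)" for t
  define m where "m k = - g (T (Suc k))" for k
  define base where "base k = (if k = 0 then 0 else m (k - 1) + \<delta>)" for k
  define A where "A k t = base k + L k t" for k t
  have F1: "snd (S k t) = g t + A k t" if "t \<ge> T k" for k t
  proof (cases k)
    case 0 then show ?thesis using eqS[OF that] T0 w0 by (simp add: g_def A_def base_def z_def)
  next
    case (Suc j)
    have "snd (z k) = \<delta>" using bdS[of j] Suc by (simp add: z_def S_def)
    then show ?thesis using eqS[OF that] Suc by (simp add: g_def A_def base_def m_def)
  qed
  have F2: "fst (S k t) = fst x + fst (w t) + (\<Sum>i\<in>{1..k}. V i)" if "t \<ge> T k" for k t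
    using that
  proof (induction k arbitrary: t)
    case 0 then show ?case using eqS[OF 0] T0 w0 by (simp add: z_def)
  next
    case (Suc k)
    have h: "T k \<le> T (Suc k)" using Tmono by blast
    have "fst (S (Suc k) t) = fst (z (Suc k)) + fst (w t) - fst (w (T (Suc k)))"
      using eqS[OF Suc.prems] by simp
    also have "fst (z (Suc k)) = fst (S k (T (Suc k))) + V (Suc k)" by (simp add: z_def S_def)
    also have "fst (S k (T (Suc k))) = fst x + fst (w (T (Suc k))) + (\<Sum>i\<in>{1..k}. V i)"
      using Suc.IH[OF h] .
    finally show ?case by simp
  qed
  have Lnn: "L k t \<ge> 0" if "t \<ge> T k" for k t
    using mono_onD[OF mL[of k], of "T k" t] that L0[of k] by simp
  have Amono: "A k s \<le> A k t" if "T k \<le> s" "s \<le> t" for k s t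
    using mono_onD[OF mL[of k], of s t] that by (simp add: A_def)
  have F3: "A k (T (Suc k)) = m k" for k
    using F1[of k "T (Suc k)"] bdS[of k] Tmono by (simp add: m_def)
  have mstep: "m (Suc k) \<ge> m k + \<delta>" for k
    using F3[of "Suc k"] Lnn[of "Suc k" "T (Suc (Suc k))"] Tmono by (simp add: A_def base_def)
  have m0: "m 0 \<ge> 0"
    using F3[of 0] Lnn[of 0 "T 1"] Tmono by (simp add: A_def base_def)
  have mlow: "m k \<ge> real k * \<delta>" for k
  proof (induction k)
    case 0 then show ?case using m0 by simp
  next
    case (Suc k) then show ?case using mstep[of k] by (simp add: algebra_simps)
  qed
  have mnn: "m k \<ge> 0" for k using mlow[of k] dpos by (metis mult_nonneg_nonneg of_nat_0_le_iff order_trans less_imp_le)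
  have basenn: "base k \<ge> 0" for k using mnn dpos by (simp add: base_def)
  have Anlow: "A k t \<ge> base k" if "t \<ge> T k" for k t using Lnn[OF that] by (simp add: A_def)
  have segb: "- g u \<le> m k" if "T k \<le> u" "u \<le> T (Suc k)" for k u
  proof -
    have "- g u \<le> A k u" using F1[OF that(1)] posS[OF that(1)] by simp
    also have "\<dots> \<le> A k (T (Suc k))" by (rule Amono[OF that])
    finally show ?thesis using F3 by simp
  qed
  have Pk: "\<forall>u. 0 \<le> u \<and> u \<le> T (Suc k) \<longrightarrow> - g u \<le> m k" for k
  proof (induction k)
    case 0 then show ?case using segb[of 0] T0 by simp
  next
    case (Suc k)
    show ?case
    proof (intro allI impI)
      fix u assume u: "0 \<le> u \<and> u \<le> T (Suc (Suc k))"
      show "- g u \<le> m (Suc k)"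
      proof (cases "u \<le> T (Suc k)")
        case True then show ?thesis using Suc.IH u mstep[of k] dpos by force
      next
        case False then show ?thesis using segb[of "Suc k" u] u by simp
      qed
    qed
  qed
  have LZeq: "snd (Zp t) = g t + LZ t" if "t \<ge> 0" for t using eqZ that w0 by (simp add: g_def)
  have fZ: "fst (Zp t) = fst x + fst (w t)" if "t \<ge> 0" for t using eqZ that w0 by simp
  have LZnn: "LZ t \<ge> 0" if "t \<ge> 0" for t using mono_onD[OF mLZ, of 0 t] that LZ0 by simp
  have LZmono: "LZ s \<le> LZ t" if "0 \<le> s" "s \<le> t" for s t using mono_onD[OF mLZ, of s t] that by simp
  have Zdom: "- g u \<le> LZ t" if "0 \<le> u" "u \<le> t" for u t
    using LZeq[OF that(1)] posZ that LZmono[OF that] by force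
  have upper: "A k t \<le> LZ t + \<delta>" if tk: "T k \<le> t" for k t
  proof -
    have t0: "t \<ge> 0" using Tnn[of k] tk by linarith
    from lastS[OF tk] show ?thesis
    proof
      assume "L k t = 0"
      then have At: "A k t = base k" by (simp add: A_def)
      show ?thesis
      proof (cases k)
        case 0 then show ?thesis using At LZnn[OF t0] dpos by (simp add: base_def)
      next
        case (Suc j)
        have "m j \<le> LZ t" unfolding m_def using Zdom[of "T (Suc j)" t] Tnn tk Suc by simp
        then show ?thesis using At Suc by (simp add: base_def)
      qed
    next
      assume "\<exists>u\<in>{T k..t}. snd (S k u) = 0 \<and> L k u = L k t"
      then obtain u where u: "u \<in> {T k..t}" "snd (S k u) = 0" "L k u = L k t" by blast
      have "A k t = A k u" using u by (simp add: A_def)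
      also have "\<dots> = - g u" using F1[of k u] u by simp
      also have "\<dots> \<le> LZ t" using Zdom[of u t] Tnn[of k] u by simp
      finally show ?thesis using dpos by simp
    qed
  qed
  have lower: "LZ t \<le> A k t" if tk: "T k \<le> t" for k t
  proof -
    have t0: "t \<ge> 0" using Tnn[of k] tk by linarith
    from lastZ[rule_format, OF t0] show ?thesis
    proof
      assume "LZ t = 0"
      then show ?thesis using Anlow[OF tk] basenn[of k] by simp
    next
      assume "\<exists>u\<in>{0..t}. snd (Zp u) = 0 \<and> LZ u = LZ t"
      then obtain u where u: "u \<in> {0..t}" "snd (Zp u) = 0" "LZ u = LZ t" by blast
      have "LZ t = - g u" using LZeq[of u] u by simp
      also have "\<dots> \<le> A k t"
      proof (cases "T k \<le> u")
        case True
        have "- g u \<le> A k u" using F1[OF True] posS[OF True] by simp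
        also have "\<dots> \<le> A k t" using Amono[OF True] u by simp
        finally show ?thesis .
      next
        case False
        then obtain j where kj: "k = Suc j" using T0 u by (cases k) auto
        have "- g u \<le> m j" using Pk[of j] u False kj by simp
        also have "\<dots> \<le> base k" using kj dpos by (simp add: base_def)
        also have "\<dots> \<le> A k t" by (rule Anlow[OF tk])
        finally show ?thesis .
      qed
      finally show ?thesis .
    qed
  qed
  have count: "real k * \<delta> \<le> LZ t + \<delta>" if tk: "T k \<le> t" for k t
  proof (cases k)
    case 0 then show ?thesis using LZnn[of t] Tnn[of k] tk dpos by simp
  next
    case (Suc j)
    have "real j * \<delta> \<le> m j" by (rule mlow)
    also have "m j \<le> LZ t" unfolding m_def using Zdom[of "T (Suc j)" t] Tnn tk Suc by simp
    finally show ?thesis using Suc by (simp add: algebra_simps)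
  qed
  have c1nn: "c1 \<ge> 0"
  proof -
    have "0 \<le> c1 * \<delta>\<^sup>2" using Vb[rule_format, of 1] by simp
    then show ?thesis using dpos by (simp add: zero_le_mult_iff)
  qed
  have segbound: "norm (S k t - Zp t) \<le> c1 * \<delta> * (LZ t + \<delta>) + \<delta>" if tk: "T k \<le> t" for k t
  proof -
    have t0: "t \<ge> 0" using Tnn[of k] tk by linarith
    have "S k t - Zp t = ((\<Sum>i\<in>{1..k}. V i), A k t - LZ t)"
      using F1[OF tk] F2[OF tk] LZeq[OF t0] fZ[OF t0] by (simp add: prod_eq_iff)
    then have "norm (S k t - Zp t) \<le> norm (\<Sum>i\<in>{1..k}. V i) + norm (A k t - LZ t)"
      using norm_Pair_le by metis
    also have "norm (A k t - LZ t) \<le> \<delta>" using upper[OF tk] lower[OF tk] by simp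
    also have "norm (\<Sum>i\<in>{1..k}. V i) \<le> (\<Sum>i\<in>{1..k}. \<bar>V i\<bar>)"
      by (simp add: sum_abs)
    also have "\<dots> \<le> real (card {1..k}) * (c1 * \<delta>\<^sup>2)"
      by (rule sum_bounded_above) (use Vb in auto)
    also have "\<dots> = c1 * \<delta> * (real k * \<delta>)" by (simp add: power2_eq_square)
    also have "\<dots> \<le> c1 * \<delta> * (LZ t + \<delta>)"
      using count[OF tk] c1nn dpos by (simp add: mult_left_mono)
    finally show ?thesis by simp
  qed
  have unb: "\<exists>n. t < T n" for t
  proof (rule ccontr)
    assume "\<not> ?thesis"
    then have bnd: "\<forall>n. T n \<le> t" by (simp add: not_less)
    have "continuous_on {0..t} (\<lambda>u. - g u)"
      unfolding g_def by (intro continuous_intros continuous_on_subset[OF wc]) auto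
    moreover have "{0..t} \<noteq> {}" using bnd[rule_format, of 0] T0 by auto
    ultimately obtain u where "\<forall>v\<in>{0..t}. - g v \<le> - g u"
      using continuous_attains_sup[of "{0..t}" "\<lambda>u. - g u"] by auto
    then have mb: "m k \<le> - g u" for k using bnd Tnn unfolding m_def by auto
    obtain n where "- g u < real n * \<delta>" using ex_less_of_nat_mult[OF dpos] by blast
    with mb[of n] mlow[of n] show False by simp
  qed
  have locate: "\<exists>k. T k \<le> t \<and> t < T (Suc k)" if "t \<ge> 0" for t
  proof -
    obtain n where n: "t < T n" using unb by blast
    have "\<not> t < T 0" using T0 that by simp
    from ex_least_nat_less[of "\<lambda>i. t < T i", OF n this] obtain k where
      "\<forall>i\<le>k. \<not> t < T i" "t < T (Suc k)" by blast
    then show ?thesis by (intro exI[of _ k]) auto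
  qed
  have XS: "X t = S k t" if "T k \<le> t" "t < T (Suc k)" for k t
    using XX[rule_format, of "Suc k" t] that by (simp add: S_def)
  have strict: "T k < T (Suc k)" for k
  proof -
    have "S k (T k) = z k" using eqS[of k "T k"] L0 by (simp add: zero_prod_def)
    moreover have "snd (z k) > 0"
      using xD dpos bd[rule_format, of k] by (simp add: z_def Dstar_bdry_def)
    ultimately have "T k \<noteq> T (Suc k)" using bdS[of k] by auto
    then show ?thesis using Tmono by (simp add: order_less_le)
  qed
  have cad: "cadlag X"
    unfolding cadlag_def
  proof safe
    fix t :: real assume t0: "t \<ge> 0"
    then obtain k where k: "T k \<le> t" "t < T (Suc k)" using locate by blast
    show "continuous (at_right t) X"
      by (rule H1[OF cS[of k] k]) (use k in \<open>auto intro!: XS\<close>)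
  next
    fix t :: real assume t0: "t > 0"
    then obtain k where k: "T k \<le> t" "t < T (Suc k)" using locate[of t] t0 by auto
    show "\<exists>l. (X \<longlongrightarrow> l) (at_left t)"
    proof (cases "T k < t")
      case True
      show ?thesis by (rule H2[OF cS[of k] True]) (use k in \<open>auto intro!: XS\<close>)
    next
      case False
      then have tk: "T k = t" using k by simp
      then obtain j where kj: "k = Suc j" using T0 t0 by (cases k) auto
      have "T j < t" using strict[of j] tk kj by simp
      show ?thesis by (rule H2[OF cS[of j] \<open>T j < t\<close>]) (use tk kj in \<open>auto intro!: XS\<close>)
    qed
  qed
  have bound: "norm (X t - Zp t) \<le> c1 * \<delta> * (snd (Zp Tm) - snd x - snd (w Tm) + \<delta>) + \<delta>"
    if tT: "0 \<le> t" "t \<le> Tm" for t Tm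
  proof -
    obtain k where k: "T k \<le> t" "t < T (Suc k)" using locate[OF tT(1)] by blast
    have "norm (X t - Zp t) \<le> c1 * \<delta> * (LZ t + \<delta>) + \<delta>" using segbound[OF k(1)] unfolding XS[OF k] .
    also have "\<dots> \<le> c1 * \<delta> * (LZ Tm + \<delta>) + \<delta>"
    proof -
      have "c1 * \<delta> \<ge> 0" using c1nn dpos by simp
      then have "c1 * \<delta> * (LZ t + \<delta>) \<le> c1 * \<delta> * (LZ Tm + \<delta>)"
        using LZmono[OF tT] by (intro mult_left_mono) auto
      then show ?thesis by linarith
    qed
    also have "LZ Tm = snd (Zp Tm) - snd x - snd (w Tm)" using LZeq[of Tm] tT by (simp add: g_def)
    finally show ?thesis .
  qed
  show ?thesis using cad bound by blast
qed


lemma good_AE: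
  assumes BM: "planar_BM M Fil W" and xD: "x \<in> Dstar" and dpos: "\<delta> > 0"
    and CP: "constructed_process M Fil W x c1 \<delta> Xd"
    and RZ: "AE \<omega> in M. RBM_path (\<lambda>t. W t \<omega>) 0 x (\<lambda>t. Z t \<omega>)"
  shows "AE \<omega> in M. cadlag (\<lambda>t. Xd t \<omega>) \<and> (\<forall>t Tm. 0 \<le> t \<longrightarrow> t \<le> Tm \<longrightarrow>
            norm (Xd t \<omega> - Z t \<omega>) \<le> c1 * \<delta> * (snd (Z Tm \<omega>) - snd x - snd (W Tm \<omega>) + \<delta>) + \<delta>)"
proof -
  obtain Xj T V where T0: "\<forall>\<omega>\<in>space M. T 0 \<omega> = 0"
    and Tm: "\<forall>j. \<forall>\<omega>\<in>space M. T j \<omega> \<le> T (Suc j) \<omega>"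
    and Vb: "\<forall>j\<ge>1. V j \<in> borel_measurable M \<and> (\<forall>\<omega>\<in>space M. \<bar>V j \<omega>\<bar> \<le> c1 * \<delta>\<^sup>2)"
    and R1: "AE \<omega> in M. RBM_path (\<lambda>t. W t \<omega>) 0 x (\<lambda>t. Xj 1 t \<omega>)"
    and bd: "\<forall>j\<ge>1. AE \<omega> in M. Xj j (T j \<omega>) \<omega> \<in> Dstar_bdry"
    and Rj: "\<forall>j\<ge>1. AE \<omega> in M.
           RBM_path (\<lambda>t. W t \<omega>) (T j \<omega>) (Xj j (T j \<omega>) \<omega> + (V j \<omega>, \<delta>)) (\<lambda>t. Xj (Suc j) t \<omega>)"
    and XX: "\<forall>j\<ge>1. \<forall>\<omega>\<in>space M. \<forall>t. T (j - 1) \<omega> \<le> t \<and> t < T j \<omega> \<longrightarrow> Xd t \<omega> = Xj j t \<omega>"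
    using CP unfolding constructed_process_def by blast
  have bd': "AE \<omega> in M. \<forall>j\<ge>1. Xj j (T j \<omega>) \<omega> \<in> Dstar_bdry"
    unfolding AE_all_countable using bd by (intro allI AE_impI) auto
  have Rj': "AE \<omega> in M. \<forall>j\<ge>1. RBM_path (\<lambda>t. W t \<omega>) (T j \<omega>) (Xj j (T j \<omega>) \<omega> + (V j \<omega>, \<delta>)) (\<lambda>t. Xj (Suc j) t \<omega>)"
    unfolding AE_all_countable using Rj by (intro allI AE_impI) auto
  have W0: "AE \<omega> in M. W 0 \<omega> = 0" and Wc: "AE \<omega> in M. continuous_on UNIV (\<lambda>t. W t \<omega>)"
    using BM unfolding planar_BM_def by blast+
  have xs: "snd x > 0" using xD by (simp add: Dstar_def)
  show ?thesis
    using AE_space W0 Wc R1 bd' Rj' RZ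
  proof eventually_elim
    case (elim \<omega>)
    show ?case
      by (rule det[of "\<lambda>t. W t \<omega>" x \<delta> "\<lambda>j. T j \<omega>" "\<lambda>j. V j \<omega>" c1 "\<lambda>j t. Xj j t \<omega>" "\<lambda>t. Xd t \<omega>" "\<lambda>t. Z t \<omega>"])
        (use elim xs dpos T0 Tm Vb XX in auto)
  qed
qed

theorem lemma2p3:
  fixes M :: "'w measure" and Fil :: "real \<Rightarrow> 'w measure"
    and W :: "real \<Rightarrow> 'w \<Rightarrow> real \<times> real"
    and x :: "real \<times> real" and c1 :: real
    and Xd :: "real \<Rightarrow> real \<Rightarrow> 'w \<Rightarrow> real \<times> real"
    and Z :: "real \<Rightarrow> 'w \<Rightarrow> real \<times> real"
  assumes "planar_BM M Fil W"
    and "x \<in> Dstar"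
    and "\<And>\<delta>. \<delta> > 0 \<Longrightarrow> constructed_process M Fil W x c1 \<delta> (Xd \<delta>)"
    and "\<And>t. Z t \<in> borel_measurable M"
    and "AE \<omega> in M. RBM_path (\<lambda>t. W t \<omega>) 0 x (\<lambda>t. Z t \<omega>)"
  shows "conv_in_distribution M Xd Z"
  unfolding conv_in_distribution_def
proof (intro allI impI)
  note BM = assms(1) and xD = assms(2) and CP = assms(3) and Zm = assms(4) and RZ = assms(5)
  interpret prob_space M using BM unfolding planar_BM_def by blast
  fix F assume "J1_test_functional F"
  then obtain B where Fm: "F \<in> borel_measurable (Pi\<^sub>M UNIV (\<lambda>_. borel))" and FB: "\<forall>f. \<bar>F f\<bar> \<le> B"
    and Fc: "\<forall>xs x. (\<forall>n. cadlag (xs n)) \<and> cadlag x \<and> skorokhod_conv xs x \<longrightarrow> (\<lambda>n. F (xs n)) \<longlonglongrightarrow> F x"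
    unfolding J1_test_functional_def by blast
  have meas: "(\<lambda>\<omega>. F (\<lambda>t. Y t \<omega>)) \<in> borel_measurable M" if "\<And>t. Y t \<in> borel_measurable M" for Y
  proof (rule measurable_compose[OF _ Fm])
    show "(\<lambda>\<omega> t. Y t \<omega>) \<in> M \<rightarrow>\<^sub>M Pi\<^sub>M UNIV (\<lambda>_. borel)"
      by (rule measurable_PiM_single') (use that in auto)
  qed
  show "((\<lambda>\<delta>. integral\<^sup>L M (\<lambda>\<omega>. F (\<lambda>t. Xd \<delta> t \<omega>))) \<longlongrightarrow> integral\<^sup>L M (\<lambda>\<omega>. F (\<lambda>t. Z t \<omega>))) (at_right 0)"
  proof (rule tendsto_at_right_sequentially[of 0 1])
    fix S :: "nat \<Rightarrow> real"
    assume Spos: "\<And>n. 0 < S n" and "\<And>n. S n < 1" and "decseq S" and S0: "S \<longlonglongrightarrow> 0"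
    have XdM: "\<And>t. Xd (S n) t \<in> borel_measurable M" for n
      using CP[OF Spos[of n]] unfolding constructed_process_def by blast
    have good: "AE \<omega> in M. \<forall>n. cadlag (\<lambda>t. Xd (S n) t \<omega>) \<and> (\<forall>t Tm. 0 \<le> t \<longrightarrow> t \<le> Tm \<longrightarrow>
            norm (Xd (S n) t \<omega> - Z t \<omega>) \<le> c1 * S n * (snd (Z Tm \<omega>) - snd x - snd (W Tm \<omega>) + S n) + S n)"
      unfolding AE_all_countable using good_AE[OF BM xD Spos CP[OF Spos] RZ] by blast
    show "(\<lambda>n. integral\<^sup>L M (\<lambda>\<omega>. F (\<lambda>t. Xd (S n) t \<omega>))) \<longlonglongrightarrow> integral\<^sup>L M (\<lambda>\<omega>. F (\<lambda>t. Z t \<omega>))"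
    proof (rule integral_dominated_convergence[where w="\<lambda>_. B"])
      show "(\<lambda>\<omega>. F (\<lambda>t. Z t \<omega>)) \<in> borel_measurable M" by (rule meas[OF Zm])
      show "(\<lambda>\<omega>. F (\<lambda>t. Xd (S n) t \<omega>)) \<in> borel_measurable M" for n by (rule meas[OF XdM])
      show "integrable M (\<lambda>_. B)" by simp
      show "AE \<omega> in M. norm (F (\<lambda>t. Xd (S n) t \<omega>)) \<le> B" for n using FB by simp
      show "AE \<omega> in M. (\<lambda>n. F (\<lambda>t. Xd (S n) t \<omega>)) \<longlonglongrightarrow> F (\<lambda>t. Z t \<omega>)"
        using good RZ
      proof eventually_elim
        case (elim \<omega>)
        have cZ: "cadlag (\<lambda>t. Z t \<omega>)" by (rule cadlag_Z[OF elim(2)])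
        have sk: "skorokhod_conv (\<lambda>n t. Xd (S n) t \<omega>) (\<lambda>t. Z t \<omega>)"
          unfolding skorokhod_conv_def
        proof (intro exI[of _ "\<lambda>n t. t"] conjI allI impI)
          fix n show "strict_mono_on {0..} (\<lambda>t::real. t)" by (simp add: strict_mono_on_def)
          show "continuous_on {0..} (\<lambda>t::real. t)" by (rule continuous_on_id)
          show "(\<lambda>t::real. t) ` {0..} = {0..}" by simp
        next
          fix Tm \<epsilon> :: real assume "Tm > 0" "\<epsilon> > 0"
          define K where "K = snd (Z Tm \<omega>) - snd x - snd (W Tm \<omega>)"
          have "(\<lambda>n. c1 * S n * (K + S n) + S n) \<longlonglongrightarrow> c1 * 0 * (K + 0) + 0"
            by (intro tendsto_intros S0)
          then have "eventually (\<lambda>n. c1 * S n * (K + S n) + S n < \<epsilon>) sequentially"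
            using \<open>\<epsilon> > 0\<close> by (intro order_tendstoD(2)) auto
          then show "eventually (\<lambda>n. \<forall>t\<in>{0..Tm}. \<bar>t - t\<bar> < \<epsilon> \<and> norm (Xd (S n) (t) \<omega> - Z t \<omega>) < \<epsilon>) sequentially"
          proof (rule eventually_mono)
            fix n assume n: "c1 * S n * (K + S n) + S n < \<epsilon>"
            show "\<forall>t\<in>{0..Tm}. \<bar>t - t\<bar> < \<epsilon> \<and> norm (Xd (S n) (t) \<omega> - Z t \<omega>) < \<epsilon>"
            proof
              fix t assume t: "t \<in> {0..Tm}"
              have "norm (Xd (S n) t \<omega> - Z t \<omega>) \<le> c1 * S n * (K + S n) + S n"
                using elim(1) t unfolding K_def by auto
              then show "\<bar>t - t\<bar> < \<epsilon> \<and> norm (Xd (S n) (t) \<omega> - Z t \<omega>) < \<epsilon>" using n \<open>\<epsilon> > 0\<close> by simp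
            qed
          qed
        qed
        show ?case using Fc[rule_format, of "\<lambda>n t. Xd (S n) t \<omega>" "\<lambda>t. Z t \<omega>"] elim(1) cZ sk by simp
      qed
    qed
  qed (simp)
qed

end
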